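(* Let $X$ and $Y$ be non-negative absolutely continuous random variables with $X\le_{disp}Y$. Then (A) $R^\alpha_\beta(X)\le R^\alpha_\beta(Y)$ if $\{\alpha<1,\ \beta\ge1\}$ or $\{\alpha>1,\ \beta\ge 1\}$; (B) $R^\alpha_\beta(X)\ge R^\alpha_\beta(Y)$ if $\{\alpha<1,\ \beta<1\}$ or $\{\alpha>1,\ \beta<1\}$, where $0<\alpha$, $\alpha\ne1$, $\beta>0$.
   Context: For a non-negative absolutely continuous random variable $X$ with PDF $f$, the Rényi information generating function is $R^\alpha_\beta(X)=\frac{1}{1-\alpha}\left(\int_0^\infty f^\alpha(x)\,dx\right)^{\beta-1}$ for $0<\alpha<\infty$, $\alpha\ne1$, $\beta>0$; all integrals are assumed finite. If $X,Y$ have PDFs $f,g$ and CDFs $F,G$, then $X$ is smaller than $Y$ in the dispersive order, $X\le_{disp}Y$, if $g(G^{-1}(u))\le f(F^{-1}(u))$ for all $u\in(0,1)$, where $F^{-1}(u)=\inf\{x:F(x)\ge u\}$. *)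

theory Defs
  imports "HOL-Probability.Probability"
begin

definition renyi_igf :: "real \<Rightarrow> real \<Rightarrow> (real \<Rightarrow> real) \<Rightarrow> real" where
  "renyi_igf \<alpha> \<beta> f = (1 / (1 - \<alpha>)) * (LBINT x:{0..}. f x powr \<alpha>) powr (\<beta> - 1)"

definition quantile :: "(real \<Rightarrow> real) \<Rightarrow> real \<Rightarrow> real" where
  "quantile F u = Inf {x. u \<le> F x}"

text \<open>Dispersive order X <=_disp Y, in terms of PDFs f, g and CDFs F, G.\<close>
definition disp_le :: "(real \<Rightarrow> real) \<Rightarrow> (real \<Rightarrow> real) \<Rightarrow> (real \<Rightarrow> real) \<Rightarrow> (real \<Rightarrow> real) \<Rightarrow> bool" where
  "disp_le f F g G \<longleftrightarrow> (\<forall>u\<in>{0<..<1}. g (quantile G u) \<le> f (quantile F u))"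

end

theory Submission
  imports Defs
begin

lemma key_lemma:
  fixes M :: "'a measure" and X :: "'a \<Rightarrow> real" and f :: "real \<Rightarrow> real" and \<alpha> :: real
  assumes M: "prob_space M" and X0: "\<forall>\<omega>\<in>space M. X \<omega> \<ge> 0" and f0: "\<forall>x. f x \<ge> 0"
    and D: "distributed M lborel X (\<lambda>x. ennreal (f x))"
  shows "(\<integral>\<^sup>+x. ennreal (indicator {0..} x *\<^sub>R f x powr \<alpha>) \<partial>lborel)
           = (\<integral>\<^sup>+u. ennreal (f (quantile (cdf (distr M borel X)) u) powr (\<alpha>-1)) \<partial>(restrict_space lborel {0<..<1}))"
    and "AE u in restrict_space lborel {0<..<1}. f (quantile (cdf (distr M borel X)) u) > 0"
    and "(\<integral>\<^sup>+x. ennreal (indicator {0..} x *\<^sub>R f x powr \<alpha>) \<partial>lborel) > 0"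
proof -
  interpret prob_space M by (rule M)
  let ?Q = "quantile (cdf (distr M borel X))"
  let ?\<Omega> = "restrict_space lborel {0<..<1::real}"
  have Xm: "X \<in> measurable M borel"
    using distributed_measurable[OF D] by simp
  have fm[measurable]: "f \<in> borel_measurable borel"
    using distributed_real_measurable[OF _ D] f0 by simp
  have fme: "(\<lambda>x. ennreal (f x)) \<in> borel_measurable lborel" by simp
  have eq: "distr M borel X = density lborel (\<lambda>x. ennreal (f x))"
  proof -
    have "distr M borel X = distr M lborel X" by (rule distr_cong) auto
    also have "\<dots> = density lborel (\<lambda>x. ennreal (f x))"
      by (rule distributed_distr_eq_density[OF D])
    finally show ?thesis .
  qed
  interpret C: cdf_distribution "distr M borel X"
    using real_distribution_distr[OF Xm] by (simp add: cdf_distribution_def)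
  have Qeq: "?Q = (\<lambda>u. Inf {x. u \<le> cdf (distr M borel X) x})"
    by (simp add: quantile_def fun_eq_iff)
  have distrQ: "distr ?\<Omega> borel ?Q = density lborel (\<lambda>x. ennreal (f x))"
  proof -
    have "distr ?\<Omega> borel ?Q = distr M borel X" unfolding Qeq by (rule C.distr_I_eq_M)
    then show ?thesis by (rule trans[OF _ eq])
  qed
  have Qm[measurable]: "?Q \<in> measurable ?\<Omega> borel"
    unfolding Qeq measurable_cong_sets[OF sets_restrict_space_cong[OF sets_lborel] refl]
    by (rule C.measurable_CI)
  have AEpos: "AE x in lborel. 0 < f x \<longrightarrow> 0 \<le> x"
  proof -
    have "AE x in distr M borel X. 0 \<le> x"
      by (subst AE_distr_iff[OF Xm]) (use X0 in auto)
    then have "AE x in density lborel (\<lambda>x. ennreal (f x)). 0 \<le> x" by (simp only: eq)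
    then have "AE x in lborel. 0 < ennreal (f x) \<longrightarrow> 0 \<le> x" by (simp only: AE_density[OF fme])
    then show ?thesis by eventually_elim simp
  qed
  have "(\<integral>\<^sup>+u. ennreal (f (?Q u) powr (\<alpha>-1)) \<partial>?\<Omega>)
        = (\<integral>\<^sup>+x. ennreal (f x powr (\<alpha>-1)) \<partial>(distr ?\<Omega> borel ?Q))"
    by (rule nn_integral_distr[symmetric]) auto
  also have "\<dots> = (\<integral>\<^sup>+x. ennreal (f x) * ennreal (f x powr (\<alpha>-1)) \<partial>lborel)"
    unfolding distrQ by (rule nn_integral_density) auto
  also have "\<dots> = (\<integral>\<^sup>+x. ennreal (f x powr \<alpha>) \<partial>lborel)"
  proof (rule nn_integral_cong)
    fix x
    show "ennreal (f x) * ennreal (f x powr (\<alpha>-1)) = ennreal (f x powr \<alpha>)"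
    proof (cases "f x = 0")
      case False
      then have "f x > 0" using f0 by (metis less_eq_real_def)
      then have "f x * f x powr (\<alpha>-1) = f x powr \<alpha>"
        by (simp add: powr_diff)
      then show ?thesis using f0 by (metis ennreal_mult' powr_ge_zero)
    qed simp
  qed
  also have "\<dots> = (\<integral>\<^sup>+x. ennreal (indicator {0..} x *\<^sub>R f x powr \<alpha>) \<partial>lborel)"
    using AEpos
  proof (intro nn_integral_cong_AE, eventually_elim)
    case (elim x)
    show ?case using elim f0[rule_format, of x] by (cases "0 \<le> x") (auto simp: indicator_def)
  qed
  finally show 1: "(\<integral>\<^sup>+x. ennreal (indicator {0..} x *\<^sub>R f x powr \<alpha>) \<partial>lborel)
           = (\<integral>\<^sup>+u. ennreal (f (?Q u) powr (\<alpha>-1)) \<partial>?\<Omega>)" by simp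
  show "AE u in ?\<Omega>. f (?Q u) > 0"
  proof -
    have "AE x in distr ?\<Omega> borel ?Q. f x > 0"
      unfolding distrQ by (simp add: AE_density[OF fme])
    then show ?thesis by (subst (asm) AE_distr_iff[OF Qm]) auto
  qed
  show "(\<integral>\<^sup>+x. ennreal (indicator {0..} x *\<^sub>R f x powr \<alpha>) \<partial>lborel) > 0"
  proof (rule ccontr)
    assume "\<not> ?thesis"
    then have "(\<integral>\<^sup>+x. ennreal (indicator {0..} x *\<^sub>R f x powr \<alpha>) \<partial>lborel) = 0"
      by simp
    then have "AE x in lborel. ennreal (indicator {0..} x *\<^sub>R f x powr \<alpha>) = 0"
      by (subst (asm) nn_integral_0_iff_AE) auto
    then have "AE x in lborel. \<not> (0 < f x)"
      using AEpos by eventually_elim (auto simp: indicator_def)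
    then have "AE x in density lborel (\<lambda>x. ennreal (f x)). False"
      by (simp add: AE_density[OF fme])
    then have "AE x in distr M borel X. False" by (simp only: eq)
    then show False
      using prob_space.AE_False[OF prob_space_distr[OF Xm]] by simp
  qed
qed

lemma igf_as_real:
  fixes f :: "real \<Rightarrow> real"
  assumes f0: "\<forall>x. f x \<ge> 0" and fm: "f \<in> borel_measurable borel"
    and I: "set_integrable lborel {0..} (\<lambda>x. f x powr \<alpha>)"
  shows "(LBINT x:{0..}. f x powr \<alpha>) = enn2real (\<integral>\<^sup>+x. ennreal (indicator {0..} x *\<^sub>R f x powr \<alpha>) \<partial>lborel)"
    and "(\<integral>\<^sup>+x. ennreal (indicator {0..} x *\<^sub>R f x powr \<alpha>) \<partial>lborel) < \<infinity>"
proof -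
  have m: "(\<lambda>x. indicator {0..} x *\<^sub>R f x powr \<alpha>) \<in> borel_measurable lborel"
    using fm by simp
  show "(LBINT x:{0..}. f x powr \<alpha>) = enn2real (\<integral>\<^sup>+x. ennreal (indicator {0..} x *\<^sub>R f x powr \<alpha>) \<partial>lborel)"
    unfolding set_lebesgue_integral_def
    by (rule integral_eq_nn_integral[OF m]) (auto simp: indicator_def)
  show "(\<integral>\<^sup>+x. ennreal (indicator {0..} x *\<^sub>R f x powr \<alpha>) \<partial>lborel) < \<infinity>"
    using integrableD(2)[OF I[unfolded set_integrable_def]] by (simp add: less_top)
qed

theorem proposition2p5:
  fixes M :: "'a measure" and N :: "'b measure" and X :: "'a \<Rightarrow> real" and Y :: "'b \<Rightarrow> real" and f g :: "real \<Rightarrow> real"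
    and \<alpha> \<beta> :: real
  assumes "prob_space M" and "prob_space N"
    and "\<forall>\<omega>\<in>space M. X \<omega> \<ge> 0" and "\<forall>\<omega>\<in>space N. Y \<omega> \<ge> 0"
    and "\<forall>x. f x \<ge> 0" and "\<forall>x. g x \<ge> 0"
    and "distributed M lborel X (\<lambda>x. ennreal (f x))"
    and "distributed N lborel Y (\<lambda>x. ennreal (g x))"
    and "set_integrable lborel {0..} (\<lambda>x. f x powr \<alpha>)"
    and "set_integrable lborel {0..} (\<lambda>x. g x powr \<alpha>)"
    and "disp_le f (cdf (distr M borel X)) g (cdf (distr N borel Y))"
    and "0 < \<alpha>" and "\<alpha> \<noteq> 1" and "0 < \<beta>"
  shows "(((\<alpha> < 1 \<and> \<beta> \<ge> 1) \<or> (\<alpha> > 1 \<and> \<beta> \<ge> 1)) \<longrightarrow> renyi_igf \<alpha> \<beta> f \<le> renyi_igf \<alpha> \<beta> g) \<and>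
    (((\<alpha> < 1 \<and> \<beta> < 1) \<or> (\<alpha> > 1 \<and> \<beta> < 1)) \<longrightarrow> renyi_igf \<alpha> \<beta> f \<ge> renyi_igf \<alpha> \<beta> g)"
proof -
  note A = assms
  let ?QF = "quantile (cdf (distr M borel X))"
  let ?QG = "quantile (cdf (distr N borel Y))"
  let ?\<Omega> = "restrict_space lborel {0<..<1::real}"
  define Jf where "Jf = (\<integral>\<^sup>+x. ennreal (indicator {0..} x *\<^sub>R f x powr \<alpha>) \<partial>lborel)"
  define Jg where "Jg = (\<integral>\<^sup>+x. ennreal (indicator {0..} x *\<^sub>R g x powr \<alpha>) \<partial>lborel)"
  define a where "a = (LBINT x:{0..}. f x powr \<alpha>)"
  define b where "b = (LBINT x:{0..}. g x powr \<alpha>)"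
  have fm: "f \<in> borel_measurable borel"
    using distributed_real_measurable[OF _ A(7)] A(5) by simp
  have gm: "g \<in> borel_measurable borel"
    using distributed_real_measurable[OF _ A(8)] A(6) by simp
  note kf = key_lemma(1)[OF A(1) A(3) A(5) A(7), of \<alpha>] key_lemma(2)[OF A(1) A(3) A(5) A(7)]
    key_lemma(3)[OF A(1) A(3) A(5) A(7), of \<alpha>]
  note kg = key_lemma(1)[OF A(2) A(4) A(6) A(8), of \<alpha>] key_lemma(2)[OF A(2) A(4) A(6) A(8)]
    key_lemma(3)[OF A(2) A(4) A(6) A(8), of \<alpha>]
  note rf = igf_as_real[OF A(5) fm A(9)]
  note rg = igf_as_real[OF A(6) gm A(10)]
  have a: "a = enn2real Jf" "Jf < \<infinity>" "0 < Jf" using rf kf(3) by (simp_all add: a_def Jf_def)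
  have b: "b = enn2real Jg" "Jg < \<infinity>" "0 < Jg" using rg kg(3) by (simp_all add: b_def Jg_def)
  have apos: "a > 0" using a by (simp add: enn2real_positive_iff)
  have bpos: "b > 0" using b by (simp add: enn2real_positive_iff)
  have disp: "\<And>u. u \<in> {0<..<1} \<Longrightarrow> g (?QG u) \<le> f (?QF u)"
    using A(11) unfolding disp_le_def by blast
  have sp: "space ?\<Omega> = {0<..<1}" by (simp add: space_restrict_space)
  have gt1: "b \<le> a" if "\<alpha> > 1"
  proof -
    have "Jg \<le> Jf"
      unfolding Jf_def Jg_def kf(1) kg(1)
    proof (rule nn_integral_mono)
      fix u assume "u \<in> space ?\<Omega>"
      then have "g (?QG u) \<le> f (?QF u)" using disp sp by auto
      then show "ennreal (g (?QG u) powr (\<alpha> - 1)) \<le> ennreal (f (?QF u) powr (\<alpha> - 1))"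
        using that A(6) by (intro ennreal_leI powr_mono2) auto
    qed
    then show ?thesis using a b by (simp add: enn2real_mono)
  qed
  have lt1: "a \<le> b" if "\<alpha> < 1"
  proof -
    have "Jf \<le> Jg"
      unfolding Jf_def Jg_def kf(1) kg(1)
    proof (rule nn_integral_mono_AE)
      show "AE u in ?\<Omega>. ennreal (f (?QF u) powr (\<alpha> - 1)) \<le> ennreal (g (?QG u) powr (\<alpha> - 1))"
        using kg(2)
      proof (rule AE_mp)
        have "AE u in ?\<Omega>. u \<in> {0<..<1}" by (rule AE_I2) (simp add: sp)
        then show "AE u in ?\<Omega>. 0 < g (?QG u) \<longrightarrow> ennreal (f (?QF u) powr (\<alpha> - 1)) \<le> ennreal (g (?QG u) powr (\<alpha> - 1))"
        proof (rule AE_mp, intro AE_I2 impI)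
          fix u assume u: "u \<in> {0<..<1}" and g0: "0 < g (?QG u)"
          then have "g (?QG u) \<le> f (?QF u)" using disp by auto
          then show "ennreal (f (?QF u) powr (\<alpha> - 1)) \<le> ennreal (g (?QG u) powr (\<alpha> - 1))"
            using that g0 by (intro ennreal_leI powr_mono2') auto
        qed
      qed
    qed
    then show ?thesis using a b by (simp add: enn2real_mono)
  qed
  have rf_eq: "renyi_igf \<alpha> \<beta> f = (1 / (1 - \<alpha>)) * a powr (\<beta> - 1)" by (simp add: renyi_igf_def a_def)
  have rg_eq: "renyi_igf \<alpha> \<beta> g = (1 / (1 - \<alpha>)) * b powr (\<beta> - 1)" by (simp add: renyi_igf_def b_def)
  show ?thesis
  proof (intro conjI impI)
    assume h: "(\<alpha> < 1 \<and> \<beta> \<ge> 1) \<or> (\<alpha> > 1 \<and> \<beta> \<ge> 1)"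
    show "renyi_igf \<alpha> \<beta> f \<le> renyi_igf \<alpha> \<beta> g"
    proof (cases "\<alpha> < 1")
      case True
      then have "a powr (\<beta> - 1) \<le> b powr (\<beta> - 1)" using h lt1 apos by (intro powr_mono2) auto
      then show ?thesis unfolding rf_eq rg_eq using True by (intro mult_left_mono) auto
    next
      case False
      then have "\<alpha> > 1" using A(13) by auto
      then have "b powr (\<beta> - 1) \<le> a powr (\<beta> - 1)" using h gt1 bpos by (intro powr_mono2) auto
      then show ?thesis unfolding rf_eq rg_eq using \<open>\<alpha> > 1\<close> by (intro mult_left_mono_neg) auto
    qed
  next
    assume h: "(\<alpha> < 1 \<and> \<beta> < 1) \<or> (\<alpha> > 1 \<and> \<beta> < 1)"
    show "renyi_igf \<alpha> \<beta> g \<le> renyi_igf \<alpha> \<beta> f"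
    proof (cases "\<alpha> < 1")
      case True
      then have "b powr (\<beta> - 1) \<le> a powr (\<beta> - 1)" using h lt1 apos by (intro powr_mono2') auto
      then show ?thesis unfolding rf_eq rg_eq using True by (intro mult_left_mono) auto
    next
      case False
      then have "\<alpha> > 1" using A(13) by auto
      then have "a powr (\<beta> - 1) \<le> b powr (\<beta> - 1)" using h gt1 bpos by (intro powr_mono2') auto
      then show ?thesis unfolding rf_eq rg_eq using \<open>\<alpha> > 1\<close> by (intro mult_left_mono_neg) auto
    qed
  qed
qed

end
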